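(* Let $n_j:=2^{2^j}$ and $t_n:=1/n$. For $i>j\ge100$ and $0\le k\le n_j$ we have $f_{n_i}(t_{n_j})=0$ and $f_{n_i}(x_{k,n_j})=0$.
   Context: Nodes: $x_{k,n}:=2k/n-1$, $k=0,\dots,n$. For $m$ such that $\sqrt m$ is an integer multiple of $4$, define $f_m:\mathbb{R}\to\mathbb{R}$ by: $f_m(x)=0$ for $x<1/m$ or $x\ge(\sqrt m-3)/m$; $f_m(x)=x-1/m$ for $1/m\le x<2/m$; $f_m(x)=\frac{4p+3}{m}-x$ for $0\le p\le\frac{\sqrt m-8}{4}$ and $\frac{4p+2}{m}\le x<\frac{4p+4}{m}$; $f_m(x)=x-\frac{4p+1}{m}$ for $1\le p\le\frac{\sqrt m-8}{4}$ and $\frac{4p}{m}\le x<\frac{4p+2}{m}$; $f_m(x)=x-\frac{\sqrt m-3}{m}$ for $\frac{\sqrt m-4}{m}\le x<\frac{\sqrt m-3}{m}$. *)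

theory Defs
  imports Complex_Main
begin

definition node :: "nat \<Rightarrow> nat \<Rightarrow> real" where
  "node k n = 2 * real k / real n - 1"

text \<open>The piecewise linear function f_m (intended for m with sqrt m an integer
multiple of 4). The pieces are pairwise disjoint and cover the real line,
so the order of the tests below is immaterial; in the two families of pieces
indexed by p the index p is the unique one whose interval contains x.\<close>
definition fm :: "nat \<Rightarrow> real \<Rightarrow> real" where
  "fm m x = (let s = sqrt (real m); M = real m in
     if x < 1 / M \<or> x \<ge> (s - 3) / M then 0
     else if 1 / M \<le> x \<and> x < 2 / M then x - 1 / M
     else if (\<exists>p::nat. real p \<le> (s - 8) / 4 \<and> (4 * real p + 2) / M \<le> x \<and> x < (4 * real p + 4) / M)
       then (4 * real (THE p::nat. real p \<le> (s - 8) / 4 \<and> (4 * real p + 2) / M \<le> x \<and> x < (4 * real p + 4) / M) + 3) / M - x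
     else if (\<exists>p::nat. 1 \<le> p \<and> real p \<le> (s - 8) / 4 \<and> (4 * real p) / M \<le> x \<and> x < (4 * real p + 2) / M)
       then x - (4 * real (THE p::nat. 1 \<le> p \<and> real p \<le> (s - 8) / 4 \<and> (4 * real p) / M \<le> x \<and> x < (4 * real p + 2) / M) + 1) / M
     else if (s - 4) / M \<le> x \<and> x < (s - 3) / M then x - (s - 3) / M
     else 0)"

definition nn :: "nat \<Rightarrow> nat" where
  "nn j = 2 ^ (2 ^ j)"

end

theory Submission
  imports Defs
begin

lemma fm_zero_ge: "x \<ge> (sqrt (real m) - 3) / real m \<Longrightarrow> fm m x = 0"
  unfolding fm_def Let_def by simp

lemma fm_zero_lt: "x < 1 / real m \<Longrightarrow> fm m x = 0"
  unfolding fm_def Let_def by simp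

theorem lemma3:
  fixes i j k :: nat
  assumes "i > j" and "j \<ge> 100" and "k \<le> nn j"
  shows "fm (nn i) (1 / real (nn j)) = 0 \<and> fm (nn i) (node k (nn j)) = 0"
proof -
  define a where "a = real (nn j)"
  define M where "M = real (nn i)"
  define s where "s = sqrt M"
  have apos: "a > 0" unfolding a_def nn_def by simp
  have Mpos: "M > 0" unfolding M_def nn_def by simp
  have "(2::nat) ^ (2 ^ j) * 2 ^ (2 ^ j) \<le> 2 ^ (2 ^ i)"
  proof -
    have "(2::nat) ^ (2 ^ j) * 2 ^ (2 ^ j) = 2 ^ (2 ^ Suc j)" by (simp add: power_add[symmetric])
    also have "\<dots> \<le> 2 ^ (2 ^ i)" using assms(1) by (intro power_increasing) auto
    finally show ?thesis .
  qed
  hence aa: "a * a \<le> M" unfolding a_def M_def nn_def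
    by (metis of_nat_le_iff of_nat_mult)
  have ss: "s * s = M" unfolding s_def using Mpos by simp
  have "a \<le> s" unfolding s_def using aa apos
    by (metis real_le_rsqrt power2_eq_square)
  hence "s * a \<le> s * s" using apos Mpos unfolding s_def by (intro mult_left_mono) auto
  hence "s * a \<le> M" using ss by simp
  hence "s / M \<le> 1 / a" using apos Mpos by (simp add: field_simps)
  hence key: "(s - 3) / M \<le> 1 / a" using Mpos
    by (smt (verit, ccfv_SIG) divide_right_mono)
  have A: "fm (nn i) (1 / real (nn j)) = 0"
    by (rule fm_zero_ge) (use key in \<open>simp add: a_def M_def s_def\<close>)
  have B: "fm (nn i) (node k (nn j)) = 0"
  proof (cases "2 * k \<le> nn j")
    case True
    hence "node k (nn j) \<le> 0" unfolding node_def using apos a_def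
      by (simp add: field_simps)
    moreover have "1 / real (nn i) > 0" using Mpos M_def by simp
    ultimately show ?thesis by (intro fm_zero_lt) linarith
  next
    case False
    hence "real (2 * k) \<ge> a + 1" unfolding a_def by linarith
    hence "node k (nn j) \<ge> 1 / a" unfolding node_def using apos a_def
      by (simp add: field_simps)
    thus ?thesis using key by (intro fm_zero_ge) (simp add: M_def s_def)
  qed
  show ?thesis using A B by simp
qed

end
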